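(* Let $\mathcal{H}$ be a projection-closed class of graphs. Then one of the following holds: (i) $\mathcal{H}$ contains $K_t$ for every $t\ge 1$; (ii) $\mathcal{H}$ contains $K_{t,t,t}$ for every $t\ge 1$; (iii) there is a $\mu\ge 0$ such that every $H\in\mathcal{H}$ has distance at most $\mu$ to extended bicliques.
   Context: A graph $H'$ is a projection of $H$ if $H'$ can be obtained from $H$ by a sequence of vertex deletions and identifications of two nonadjacent vertices; a class of graphs (closed under isomorphism) is projection-closed if it contains every projection of each of its members. $K_{t,t,t}$ is the complete tripartite graph with three parts of size $t$. An extended biclique is a complete bipartite graph together with a set of isolated vertices; the distance of $H$ to extended bicliques is the minimum number of vertices to delete from $H$ to obtain an extended biclique. *)

theory Defs
  imports Main
begin

(* Finite simple graphs on natural-number vertices: (V, E) with E a set of 2-element subsets of V *)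
type_synonym graph = "nat set \<times> nat set set"

definition verts :: "graph \<Rightarrow> nat set" where "verts G = fst G"
definition edges :: "graph \<Rightarrow> nat set set" where "edges G = snd G"

definition is_graph :: "graph \<Rightarrow> bool" where
  "is_graph G \<longleftrightarrow> finite (verts G) \<and>
     (\<forall>e\<in>edges G. \<exists>u v. e = {u, v} \<and> u \<noteq> v \<and> u \<in> verts G \<and> v \<in> verts G)"

definition graph_iso :: "graph \<Rightarrow> graph \<Rightarrow> bool" where
  "graph_iso G H \<longleftrightarrow> (\<exists>f. bij_betw f (verts G) (verts H) \<and>
     (\<forall>u\<in>verts G. \<forall>v\<in>verts G. {u, v} \<in> edges G \<longleftrightarrow> {f u, f v} \<in> edges H))"

definition delete_vertex :: "graph \<Rightarrow> nat \<Rightarrow> graph" where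
  "delete_vertex G x = (verts G - {x}, {e \<in> edges G. x \<notin> e})"

definition identify :: "graph \<Rightarrow> nat \<Rightarrow> nat \<Rightarrow> graph" where
  "identify G u v = (verts G - {u},
      {e \<in> edges G. u \<notin> e} \<union> {{v, w} | w. {u, w} \<in> edges G})"

inductive projection_step :: "graph \<Rightarrow> graph \<Rightarrow> bool" where
  del: "x \<in> verts G \<Longrightarrow> projection_step G (delete_vertex G x)"
| ident: "u \<in> verts G \<Longrightarrow> v \<in> verts G \<Longrightarrow> u \<noteq> v \<Longrightarrow> {u, v} \<notin> edges G
          \<Longrightarrow> projection_step G (identify G u v)"

definition is_projection :: "graph \<Rightarrow> graph \<Rightarrow> bool" where
  "is_projection H' H \<longleftrightarrow> projection_step\<^sup>*\<^sup>* H H'"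

definition graph_class :: "graph set \<Rightarrow> bool" where
  "graph_class \<H> \<longleftrightarrow> (\<forall>G\<in>\<H>. is_graph G) \<and>
     (\<forall>G\<in>\<H>. \<forall>H. is_graph H \<and> graph_iso G H \<longrightarrow> H \<in> \<H>)"

definition projection_closed :: "graph set \<Rightarrow> bool" where
  "projection_closed \<H> \<longleftrightarrow> (\<forall>H\<in>\<H>. \<forall>H'. is_projection H' H \<longrightarrow> H' \<in> \<H>)"

definition complete_graph :: "nat \<Rightarrow> graph" where
  "complete_graph t = ({0..<t}, {{u, v} | u v. u < t \<and> v < t \<and> u \<noteq> v})"

(* K_{t,t,t}: parts {0..<t}, {t..<2t}, {2t..<3t} *)
definition complete_tripartite :: "nat \<Rightarrow> graph" where
  "complete_tripartite t = ({0..<3*t},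
      {{u, v} | u v. u < 3*t \<and> v < 3*t \<and> u div t \<noteq> v div t})"

definition contains :: "graph set \<Rightarrow> graph \<Rightarrow> bool" where
  "contains \<H> H \<longleftrightarrow> (\<exists>G\<in>\<H>. graph_iso G H)"

definition induced_delete :: "graph \<Rightarrow> nat set \<Rightarrow> graph" where
  "induced_delete G X = (verts G - X, {e \<in> edges G. e \<inter> X = {}})"

(* complete bipartite graph (parts A, B) plus isolated vertices *)
definition extended_biclique :: "graph \<Rightarrow> bool" where
  "extended_biclique G \<longleftrightarrow> (\<exists>A B. A \<inter> B = {} \<and> A \<union> B \<subseteq> verts G \<and>
      edges G = {{a, b} | a b. a \<in> A \<and> b \<in> B})"

definition dist_ext_biclique_le :: "graph \<Rightarrow> nat \<Rightarrow> bool" where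
  "dist_ext_biclique_le G \<mu> \<longleftrightarrow>
     (\<exists>X \<subseteq> verts G. card X \<le> \<mu> \<and> extended_biclique (induced_delete G X))"

end

theory Submission
  imports Defs "HOL-Library.Ramsey"
begin

lemma verts_simp[simp]: "verts (a,b) = a" and edges_simp[simp]: "edges (a,b) = b"
  by (simp_all add: verts_def edges_def)

lemma graph_eta: "G = (verts G, edges G)"
  by (simp add: verts_def edges_def)

lemma is_graph_edge_mem: "is_graph G \<Longrightarrow> {x,y} \<in> edges G \<Longrightarrow> x \<in> verts G \<and> y \<in> verts G \<and> x \<noteq> y"
  unfolding is_graph_def by (metis doubleton_eq_iff)

lemma is_graph_single: "is_graph G \<Longrightarrow> {x} \<notin> edges G"
  using is_graph_edge_mem[of G x x] by (metis insert_absorb2)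

lemma is_graph_induced_delete: assumes "is_graph G" shows "is_graph (induced_delete G X)"
  unfolding is_graph_def
proof (intro conjI ballI)
  show "finite (verts (induced_delete G X))" using assms by (simp add: is_graph_def induced_delete_def)
next
  fix e assume "e \<in> edges (induced_delete G X)"
  then have e: "e \<in> edges G" "e \<inter> X = {}" by (auto simp: induced_delete_def)
  then obtain u v where "e = {u, v}" "u \<noteq> v" "u \<in> verts G" "v \<in> verts G"
    using assms unfolding is_graph_def by blast
  moreover have "u \<notin> X" "v \<notin> X" using e(2) calculation(1) by auto
  ultimately show "\<exists>u v. e = {u, v} \<and> u \<noteq> v \<and> u \<in> verts (induced_delete G X) \<and> v \<in> verts (induced_delete G X)"
    by (auto simp: induced_delete_def)
qed

lemma del_reach:
  assumes "finite X" "X \<subseteq> verts G"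
  shows "projection_step\<^sup>*\<^sup>* G (induced_delete G X)"
  using assms
proof (induction X rule: finite_induct)
  case empty
  have "induced_delete G {} = G" by (subst (2) graph_eta) (simp add: induced_delete_def)
  then show ?case by simp
next
  case (insert x X)
  have "induced_delete G (insert x X) = delete_vertex (induced_delete G X) x"
    by (auto simp: induced_delete_def delete_vertex_def)
  moreover have "x \<in> verts (induced_delete G X)" using insert by (auto simp: induced_delete_def)
  ultimately show ?case using insert projection_step.del
    by (metis insert_subset rtranclp.rtrancl_into_rtrancl)
qed

definition quot :: "graph \<Rightarrow> (nat \<Rightarrow> nat) \<Rightarrow> graph" where
  "quot G f = (f ` verts G, {{f x, f y} | x y. {x,y} \<in> edges G})"

lemma quot_reach:
  "is_graph G \<Longrightarrow> (\<forall>v\<in>verts G. f v \<in> verts G \<and> f (f v) = f v) \<Longrightarrow>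
   (\<forall>x\<in>verts G. \<forall>y\<in>verts G. f x = f y \<longrightarrow> {x,y} \<notin> edges G) \<Longrightarrow>
   projection_step\<^sup>*\<^sup>* G (quot G f)"
proof (induction "card {v\<in>verts G. f v \<noteq> v}" arbitrary: G rule: less_induct)
  case less
  show ?case
  proof (cases "{v\<in>verts G. f v \<noteq> v} = {}")
    case True
    have "f ` verts G = verts G" using True by force
    moreover have "{{f x, f y} | x y. {x,y} \<in> edges G} = edges G"
    proof -
      have "{x,y} \<in> edges G \<Longrightarrow> f x = x \<and> f y = y" for x y
        using True is_graph_edge_mem[OF less.prems(1)] by blast
      moreover have "e \<in> edges G \<Longrightarrow> \<exists>x y. e = {x,y}" for e
        using less.prems(1) unfolding is_graph_def by blast
      ultimately show ?thesis
      proof (intro set_eqI iffI)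
        fix e assume "e \<in> {{f x, f y} | x y. {x,y} \<in> edges G}"
        then obtain x y where "e = {f x, f y}" "{x,y} \<in> edges G" by blast
        then show "e \<in> edges G" using \<open>\<And>x y. {x,y} \<in> edges G \<Longrightarrow> f x = x \<and> f y = y\<close> by metis
      next
        fix e assume e: "e \<in> edges G"
        then obtain x y where "e = {x,y}" using \<open>\<And>e. e \<in> edges G \<Longrightarrow> \<exists>x y. e = {x,y}\<close> by blast
        moreover have "f x = x" "f y = y" using e calculation \<open>\<And>x y. {x,y} \<in> edges G \<Longrightarrow> f x = x \<and> f y = y\<close> by auto
        ultimately have "e = {f x, f y}" "{x,y} \<in> edges G" using e by auto
        then show "e \<in> {{f x, f y} | x y. {x,y} \<in> edges G}" by blast
      qed
    qed
    ultimately have "quot G f = G" unfolding quot_def by (metis graph_eta)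
    then show ?thesis by simp
  next
    case False
    then obtain u where u: "u \<in> verts G" "f u \<noteq> u" by auto
    define v where "v = f u"
    have v: "v \<in> verts G" "f v = v" "u \<noteq> v" using less.prems(2) u unfolding v_def by auto
    have nuv: "{u,v} \<notin> edges G" using less.prems(3) u v unfolding v_def by metis
    define G' where "G' = identify G u v"
    have step: "projection_step G G'" unfolding G'_def
      using projection_step.ident[OF u(1) v(1) v(3) nuv] .
    have VG': "verts G' = verts G - {u}" unfolding G'_def identify_def by simp
    have EG': "edges G' = {e \<in> edges G. u \<notin> e} \<union> {{v, w} | w. {u, w} \<in> edges G}"
      unfolding G'_def identify_def by simp
    have gG': "is_graph G'"
      unfolding is_graph_def
    proof (intro conjI ballI)
      show "finite (verts G')" using less.prems(1) VG' unfolding is_graph_def by simp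
    next
      fix e assume "e \<in> edges G'"
      then consider "e \<in> edges G" "u \<notin> e" | w where "e = {v,w}" "{u,w} \<in> edges G"
        unfolding EG' by blast
      then show "\<exists>a b. e = {a, b} \<and> a \<noteq> b \<and> a \<in> verts G' \<and> b \<in> verts G'"
      proof cases
        case 1
        then obtain a b where "e = {a,b}" "a \<noteq> b" "a \<in> verts G" "b \<in> verts G"
          using less.prems(1) unfolding is_graph_def by blast
        then show ?thesis using 1 VG' by auto
      next
        case 2
        have "w \<in> verts G" "w \<noteq> u" using is_graph_edge_mem[OF less.prems(1) 2(2)] by auto
        moreover have "w \<noteq> v" using 2 nuv by auto
        ultimately show ?thesis using 2 VG' v by auto
      qed
    qed
    have fG': "\<forall>w\<in>verts G'. f w \<in> verts G' \<and> f (f w) = f w"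
    proof
      fix w assume w: "w \<in> verts G'"
      then have "w \<in> verts G" using VG' by auto
      then have "f w \<in> verts G" "f (f w) = f w" using less.prems(2) by auto
      moreover have "f w \<noteq> u" using \<open>f (f w) = f w\<close> u by metis
      ultimately show "f w \<in> verts G' \<and> f (f w) = f w" using VG' by auto
    qed
    have iG': "\<forall>x\<in>verts G'. \<forall>y\<in>verts G'. f x = f y \<longrightarrow> {x,y} \<notin> edges G'"
    proof (intro ballI impI)
      fix x y assume xy: "x \<in> verts G'" "y \<in> verts G'" "f x = f y"
      show "{x,y} \<notin> edges G'"
      proof
        assume "{x,y} \<in> edges G'"
        then consider "{x,y} \<in> edges G" | w where "{x,y} = {v,w}" "{u,w} \<in> edges G"
          unfolding EG' by blast
        then show False
        proof cases
          case 1 then show False using less.prems(3) xy VG' by auto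
        next
          case 2
          have "w \<in> verts G" using is_graph_edge_mem[OF less.prems(1) 2(2)] by auto
          have "f v = f w" using 2(1) xy(3) by (auto simp: doubleton_eq_iff)
          then have "f u = f w" using v unfolding v_def by simp
          then show False using less.prems(3) u(1) \<open>w \<in> verts G\<close> 2(2) by auto
        qed
      qed
    qed
    have card: "card {w\<in>verts G'. f w \<noteq> w} < card {w\<in>verts G. f w \<noteq> w}"
    proof -
      have e1: "{w\<in>verts G'. f w \<noteq> w} = {w\<in>verts G. f w \<noteq> w} - {u}" using VG' by auto
      have e2: "finite {w\<in>verts G. f w \<noteq> w}" using less.prems(1) unfolding is_graph_def by simp
      have e3: "u \<in> {w\<in>verts G. f w \<noteq> w}" using u by simp
      show ?thesis unfolding e1 by (rule card_Diff1_less[OF e2 e3])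
    qed
    have eqV: "f ` verts G' = f ` verts G"
    proof -
      have "v \<in> verts G'" using v VG' by auto
      then have "f v \<in> f ` verts G'" by blast
      then have "f u \<in> f ` verts G'" using v(2) unfolding v_def by simp
      then show ?thesis using VG' by auto
    qed
    have eqE: "{{f x, f y} | x y. {x,y} \<in> edges G'} = {{f x, f y} | x y. {x,y} \<in> edges G}"
    proof (intro set_eqI iffI)
      fix e assume "e \<in> {{f x, f y} | x y. {x,y} \<in> edges G'}"
      then obtain x y where e: "e = {f x, f y}" "{x,y} \<in> edges G'" by blast
      from e(2) consider "{x,y} \<in> edges G" | w where "{x,y} = {v,w}" "{u,w} \<in> edges G"
        unfolding EG' by blast
      then show "e \<in> {{f x, f y} | x y. {x,y} \<in> edges G}"
      proof cases
        case 1 then show ?thesis using e by blast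
      next
        case 2
        have "e = {f u, f w}" using e(1) 2(1) v unfolding v_def by (auto simp: doubleton_eq_iff)
        then show ?thesis using 2 by blast
      qed
    next
      fix e assume "e \<in> {{f x, f y} | x y. {x,y} \<in> edges G}"
      then obtain x y where e: "e = {f x, f y}" "{x,y} \<in> edges G" by blast
      have xy: "x \<noteq> y" using is_graph_edge_mem[OF less.prems(1) e(2)] by auto
      show "e \<in> {{f x, f y} | x y. {x,y} \<in> edges G'}"
      proof (cases "u \<in> {x,y}")
        case False
        then show ?thesis using e EG' by blast
      next
        case True
        then consider "x = u" | "y = u" by auto
        then show ?thesis
        proof cases
          case 1
          then have "{v,y} \<in> edges G'" using e(2) EG' by blast
          moreover have "e = {f v, f y}" using e(1) 1 v unfolding v_def by simp
          ultimately show ?thesis by blast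
        next
          case 2
          then have "{u,x} \<in> edges G" using e(2) by (simp add: insert_commute)
          then have "{v,x} \<in> edges G'" using EG' by blast
          moreover have "e = {f v, f x}" using e(1) 2 v unfolding v_def by (simp add: insert_commute)
          ultimately show ?thesis by blast
        qed
      qed
    qed
    have eq: "quot G' f = quot G f" unfolding quot_def using eqV eqE by simp
    from less.hyps[OF card gG' fG' iG'] step eq show ?thesis
      by (metis converse_rtranclp_into_rtranclp)
  qed
qed

definition qfam :: "graph \<Rightarrow> nat \<Rightarrow> (nat \<Rightarrow> nat set) \<Rightarrow> (nat \<Rightarrow> nat \<Rightarrow> bool) \<Rightarrow> bool" where
 "qfam G m C R \<longleftrightarrow> (\<forall>c<m. C c \<noteq> {} \<and> C c \<subseteq> verts G \<and> (\<forall>x\<in>C c. \<forall>y\<in>C c. {x,y} \<notin> edges G)) \<and>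
    (\<forall>c<m. \<forall>d<m. c \<noteq> d \<longrightarrow> C c \<inter> C d = {}) \<and>
    (\<forall>c<m. \<forall>d<m. c \<noteq> d \<longrightarrow> ((\<exists>x\<in>C c. \<exists>y\<in>C d. {x,y} \<in> edges G) \<longleftrightarrow> R c d))"

lemma qfam_proj:
  assumes g: "is_graph G" and q: "qfam G m C R" and vK: "verts K = {0..<m}"
    and eK: "\<forall>c<m. \<forall>d<m. ({c,d} \<in> edges K \<longleftrightarrow> c \<noteq> d \<and> R c d)"
  shows "\<exists>H'. is_projection H' G \<and> graph_iso H' K"
proof -
  have ne: "\<And>c. c < m \<Longrightarrow> C c \<noteq> {}" and sub: "\<And>c. c < m \<Longrightarrow> C c \<subseteq> verts G"
    and ind: "\<And>c x y. c < m \<Longrightarrow> x \<in> C c \<Longrightarrow> y \<in> C c \<Longrightarrow> {x,y} \<notin> edges G"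
    and dis: "\<And>c d. c < m \<Longrightarrow> d < m \<Longrightarrow> c \<noteq> d \<Longrightarrow> C c \<inter> C d = {}"
    and adj: "\<And>c d. c < m \<Longrightarrow> d < m \<Longrightarrow> c \<noteq> d \<Longrightarrow> ((\<exists>x\<in>C c. \<exists>y\<in>C d. {x,y} \<in> edges G) \<longleftrightarrow> R c d)"
    using q unfolding qfam_def by blast+
  define S where "S = (\<Union>c\<in>{..<m}. C c)"
  have SV: "S \<subseteq> verts G" using sub unfolding S_def by blast
  define rep where "rep c = (SOME x. x \<in> C c)" for c
  have rep: "c < m \<Longrightarrow> rep c \<in> C c" for c using ne unfolding rep_def by (simp add: some_in_eq)
  define cls where "cls v = (THE c. c < m \<and> v \<in> C c)" for v
  have cls: "c < m \<Longrightarrow> v \<in> C c \<Longrightarrow> cls v = c" for c v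
  proof -
    assume a: "c < m" "v \<in> C c"
    show "cls v = c" unfolding cls_def
    proof (rule the_equality)
      show "c < m \<and> v \<in> C c" using a by simp
      fix d assume "d < m \<and> v \<in> C d"
      then show "d = c" using dis[of c d] a by blast
    qed
  qed
  have clsS: "v \<in> S \<Longrightarrow> cls v < m \<and> v \<in> C (cls v)" for v
    unfolding S_def using cls by auto
  have rep_inj: "c < m \<Longrightarrow> d < m \<Longrightarrow> rep c = rep d \<Longrightarrow> c = d" for c d
  proof (rule ccontr)
    assume a: "c < m" "d < m" "rep c = rep d" "c \<noteq> d"
    then have "rep c \<in> C c \<inter> C d" using rep[of c] rep[of d] by simp
    then show False using dis[OF a(1,2,4)] by simp
  qed
  define f where "f v = (if v \<in> S then rep (cls v) else v)" for v
  define G1 where "G1 = induced_delete G (verts G - S)"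
  have VG1: "verts G1 = S" using SV unfolding G1_def induced_delete_def by auto
  have EG1: "edges G1 = {e \<in> edges G. e \<inter> (verts G - S) = {}}" unfolding G1_def induced_delete_def by simp
  have gG1: "is_graph G1" unfolding G1_def by (rule is_graph_induced_delete[OF g])
  have fS: "v \<in> S \<Longrightarrow> f v \<in> S \<and> cls (f v) = cls v" for v
  proof -
    assume v: "v \<in> S"
    then have "f v = rep (cls v)" unfolding f_def by simp
    moreover have "rep (cls v) \<in> C (cls v)" using rep clsS v by blast
    ultimately show ?thesis using clsS v cls unfolding S_def by auto
  qed
  have step1: "projection_step\<^sup>*\<^sup>* G G1"
    unfolding G1_def by (rule del_reach) (use g in \<open>auto simp: is_graph_def\<close>)
  have step2: "projection_step\<^sup>*\<^sup>* G1 (quot G1 f)"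
  proof (rule quot_reach[OF gG1])
    show "\<forall>v\<in>verts G1. f v \<in> verts G1 \<and> f (f v) = f v"
      unfolding VG1 using fS f_def by metis
    show "\<forall>x\<in>verts G1. \<forall>y\<in>verts G1. f x = f y \<longrightarrow> {x, y} \<notin> edges G1"
    proof (intro ballI impI)
      fix x y assume xy: "x \<in> verts G1" "y \<in> verts G1" "f x = f y"
      then have "cls x = cls y" using fS VG1 by metis
      then have "x \<in> C (cls x)" "y \<in> C (cls x)" "cls x < m" using clsS xy VG1 by metis+
      then show "{x, y} \<notin> edges G1" using ind EG1 by blast
    qed
  qed
  have proj: "is_projection (quot G1 f) G"
    unfolding is_projection_def using step1 step2 by simp
  have Vq: "verts (quot G1 f) = rep ` {..<m}"
  proof -
    have "f ` S = rep ` {..<m}"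
    proof
      show "f ` S \<subseteq> rep ` {..<m}" using clsS f_def by auto
      show "rep ` {..<m} \<subseteq> f ` S"
      proof
        fix x assume "x \<in> rep ` {..<m}"
        then obtain c where c: "c < m" "x = rep c" by auto
        then have "x \<in> S" "cls x = c" using rep cls unfolding S_def by auto
        then show "x \<in> f ` S" using c f_def by force
      qed
    qed
    then show ?thesis unfolding quot_def VG1 by simp
  qed
  have Eq: "{rep c, rep d} \<in> edges (quot G1 f) \<longleftrightarrow> c \<noteq> d \<and> R c d" if cd: "c < m" "d < m" for c d
  proof
    assume "{rep c, rep d} \<in> edges (quot G1 f)"
    then obtain x y where xy: "{rep c, rep d} = {f x, f y}" "{x,y} \<in> edges G1"
      unfolding quot_def by auto
    have xyS: "x \<in> S" "y \<in> S" using is_graph_edge_mem[OF gG1 xy(2)] VG1 by auto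
    have exy: "{x,y} \<in> edges G" using xy(2) EG1 by auto
    have fx: "f x = rep (cls x)" "f y = rep (cls y)" using xyS f_def by auto
    have ne: "cls x \<noteq> cls y"
    proof
      assume "cls x = cls y"
      then show False using ind[of "cls x" x y] clsS xyS exy by metis
    qed
    have mm: "cls x < m" "cls y < m" "x \<in> C (cls x)" "y \<in> C (cls y)" using clsS xyS by auto
    from xy(1) fx have "(rep c = rep (cls x) \<and> rep d = rep (cls y)) \<or> (rep c = rep (cls y) \<and> rep d = rep (cls x))"
      by (auto simp: doubleton_eq_iff)
    then have disj: "(c = cls x \<and> d = cls y) \<or> (c = cls y \<and> d = cls x)"
      using rep_inj cd mm by metis
    have eyx: "{y,x} \<in> edges G" using exy by (simp add: insert_commute)
    from disj show "c \<noteq> d \<and> R c d"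
    proof
      assume h: "c = cls x \<and> d = cls y"
      then have cd': "c \<noteq> d" using ne by simp
      have "\<exists>x\<in>C c. \<exists>y\<in>C d. {x,y} \<in> edges G" using h mm exy by blast
      then show ?thesis using adj[OF cd cd'] cd' by simp
    next
      assume h: "c = cls y \<and> d = cls x"
      then have cd': "c \<noteq> d" using ne by simp
      have "\<exists>x\<in>C c. \<exists>y\<in>C d. {x,y} \<in> edges G" using h mm eyx by blast
      then show ?thesis using adj[OF cd cd'] cd' by simp
    qed
  next
    assume "c \<noteq> d \<and> R c d"
    then obtain x y where xy: "x \<in> C c" "y \<in> C d" "{x,y} \<in> edges G" using adj[OF cd] by blast
    then have xyS: "x \<in> S" "y \<in> S" using cd unfolding S_def by auto
    then have "{x,y} \<in> edges G1" using xy(3) EG1 by auto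
    moreover have "f x = rep c" "f y = rep d" using xyS xy cls cd f_def by auto
    ultimately show "{rep c, rep d} \<in> edges (quot G1 f)" unfolding quot_def by force
  qed
  have iso: "graph_iso (quot G1 f) K"
    unfolding graph_iso_def
  proof (intro exI conjI)
    show "bij_betw cls (verts (quot G1 f)) (verts K)"
      unfolding Vq vK
      by (rule bij_betw_byWitness[where f'=rep]) (use rep cls in auto)
    show "\<forall>u\<in>verts (quot G1 f). \<forall>v\<in>verts (quot G1 f). ({u, v} \<in> edges (quot G1 f)) = ({cls u, cls v} \<in> edges K)"
      unfolding Vq
    proof (intro ballI)
      fix u v assume "u \<in> rep ` {..<m}" "v \<in> rep ` {..<m}"
      then obtain c d where cd: "c < m" "d < m" "u = rep c" "v = rep d" by auto
      then have "cls u = c" "cls v = d" using rep cls by auto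
      then show "({u, v} \<in> edges (quot G1 f)) = ({cls u, cls v} \<in> edges K)"
        using Eq[OF cd(1,2)] eK cd by simp
    qed
  qed
  show ?thesis using proj iso by blast
qed

definition Lt :: "nat \<Rightarrow> nat" where "Lt \<tau> = (if \<tau> = 0 then 3 else 4)"

definition Wt :: "nat \<Rightarrow> nat \<Rightarrow> nat \<Rightarrow> bool" where
 "Wt \<tau> p q = (if \<tau> = 0 then p \<noteq> q
   else if \<tau> = 1 then ((p = 0 \<and> q = 1) \<or> (p = 1 \<and> q = 0) \<or> (p = 1 \<and> q = 2) \<or> (p = 2 \<and> q = 1)
                      \<or> (p = 2 \<and> q = 3) \<or> (p = 3 \<and> q = 2))
   else ((p = 0 \<and> q = 1) \<or> (p = 1 \<and> q = 0) \<or> (p = 2 \<and> q = 3) \<or> (p = 3 \<and> q = 2)))"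

definition gadget :: "graph \<Rightarrow> nat \<Rightarrow> (nat \<Rightarrow> nat) \<Rightarrow> bool" where
  "gadget G \<tau> g \<longleftrightarrow> \<tau> < 3 \<and> inj_on g {..<Lt \<tau>} \<and> g ` {..<Lt \<tau>} \<subseteq> verts G \<and>
     (\<forall>p<Lt \<tau>. \<forall>q<Lt \<tau>. p \<noteq> q \<longrightarrow> ({g p, g q} \<in> edges G \<longleftrightarrow> Wt \<tau> p q))"

lemma all3: "(\<forall>p<(3::nat). P p) = (P 0 \<and> P 1 \<and> P 2)"
  by (auto simp: eval_nat_numeral less_Suc_eq)
lemma all4: "(\<forall>p<(4::nat). P p) = (P 0 \<and> P 1 \<and> P 2 \<and> P 3)"
  by (auto simp: eval_nat_numeral less_Suc_eq)

lemma gadget_list: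
  assumes "\<tau> < 3" "length xs = Lt \<tau>" "distinct xs" "set xs \<subseteq> verts G"
    "\<forall>p<Lt \<tau>. \<forall>q<Lt \<tau>. p \<noteq> q \<longrightarrow> ({xs!p, xs!q} \<in> edges G \<longleftrightarrow> Wt \<tau> p q)"
  shows "gadget G \<tau> (\<lambda>p. xs ! p)"
  unfolding gadget_def
proof (intro conjI)
  show "inj_on (\<lambda>p. xs ! p) {..<Lt \<tau>}" using assms(2,3) by (simp add: inj_on_def nth_eq_iff_index_eq)
  show "(\<lambda>p. xs ! p) ` {..<Lt \<tau>} \<subseteq> verts G" using assms(2,4) by (auto simp: set_conv_nth)
qed (use assms in auto)

lemma gadget_tri:
  assumes g: "is_graph G" and e: "{x,y} \<in> edges G" "{y,z} \<in> edges G" "{x,z} \<in> edges G"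
  shows "gadget G 0 (\<lambda>p. [x,y,z]!p)"
proof (rule gadget_list)
  have e': "{y,x} \<in> edges G" "{z,y} \<in> edges G" "{z,x} \<in> edges G" using e by (simp_all add: insert_commute)
  show "distinct [x,y,z]" "set [x,y,z] \<subseteq> verts G" using is_graph_edge_mem[OF g] e by auto
  show "\<forall>p<Lt 0. \<forall>q<Lt 0. p \<noteq> q \<longrightarrow> ({[x,y,z]!p, [x,y,z]!q} \<in> edges G \<longleftrightarrow> Wt 0 p q)"
    unfolding Lt_def Wt_def using e e' by (simp add: all3; simp add: eval_nat_numeral)
qed (simp_all add: Lt_def)

lemma gadget_P4:
  assumes g: "is_graph G" and d: "distinct [x,y,z,w]" and e: "{x,y} \<in> edges G" "{y,z} \<in> edges G" "{z,w} \<in> edges G"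
   and n: "{x,z} \<notin> edges G" "{y,w} \<notin> edges G" "{x,w} \<notin> edges G"
  shows "gadget G 1 (\<lambda>p. [x,y,z,w]!p)"
proof (rule gadget_list)
  have e': "{y,x} \<in> edges G" "{z,y} \<in> edges G" "{w,z} \<in> edges G" using e by (simp_all add: insert_commute)
  have n': "{z,x} \<notin> edges G" "{w,y} \<notin> edges G" "{w,x} \<notin> edges G" using n by (simp_all add: insert_commute)
  show "set [x,y,z,w] \<subseteq> verts G" using is_graph_edge_mem[OF g] e by auto
  show "\<forall>p<Lt 1. \<forall>q<Lt 1. p \<noteq> q \<longrightarrow> ({[x,y,z,w]!p, [x,y,z,w]!q} \<in> edges G \<longleftrightarrow> Wt 1 p q)"
    unfolding Lt_def Wt_def using e e' n n' by (simp add: all4; simp add: eval_nat_numeral)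
qed (use d in \<open>simp_all add: Lt_def\<close>)

lemma gadget_2K2:
  assumes g: "is_graph G" and d: "distinct [x,y,z,w]" and e: "{x,y} \<in> edges G" "{z,w} \<in> edges G"
   and n: "{x,z} \<notin> edges G" "{x,w} \<notin> edges G" "{y,z} \<notin> edges G" "{y,w} \<notin> edges G"
  shows "gadget G 2 (\<lambda>p. [x,y,z,w]!p)"
proof (rule gadget_list)
  have e': "{y,x} \<in> edges G" "{w,z} \<in> edges G" using e by (simp_all add: insert_commute)
  have n': "{z,x} \<notin> edges G" "{w,x} \<notin> edges G" "{z,y} \<notin> edges G" "{w,y} \<notin> edges G" using n by (simp_all add: insert_commute)
  show "set [x,y,z,w] \<subseteq> verts G" using is_graph_edge_mem[OF g] e by auto
  show "\<forall>p<Lt 2. \<forall>q<Lt 2. p \<noteq> q \<longrightarrow> ({[x,y,z,w]!p, [x,y,z,w]!q} \<in> edges G \<longleftrightarrow> Wt 2 p q)"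
    unfolding Lt_def Wt_def using e e' n n' by (simp add: all4; simp add: eval_nat_numeral)
qed (use d in \<open>simp_all add: Lt_def\<close>)

lemma adj_sym: "({x,y} \<in> E) = ({y,x} \<in> E)" by (simp add: insert_commute)

lemma obstruction:
  assumes g: "is_graph G" and nb: "\<not> extended_biclique G"
  shows "\<exists>\<tau> g. gadget G \<tau> g"
proof (rule ccontr)
  assume nog: "\<not> (\<exists>\<tau> g. gadget G \<tau> g)"
  define adj where "adj x y \<longleftrightarrow> {x,y} \<in> edges G" for x y
  have sym: "adj x y = adj y x" for x y unfolding adj_def by (simp add: insert_commute)
  have adjV: "adj x y \<Longrightarrow> x \<in> verts G \<and> y \<in> verts G \<and> x \<noteq> y" for x y
    unfolding adj_def using is_graph_edge_mem[OF g] by blast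
  have notri: "\<not> (adj x y \<and> adj y z \<and> adj x z)" for x y z
  proof
    assume a: "adj x y \<and> adj y z \<and> adj x z"
    have "gadget G 0 (\<lambda>p. [x,y,z] ! p)"
      by (rule gadget_tri[OF g]) (use a in \<open>simp_all add: adj_def\<close>)
    then show False using nog by blast
  qed
  have noP4: "\<not> (distinct [x,y,z,w] \<and> adj x y \<and> adj y z \<and> adj z w \<and> \<not> adj x z \<and> \<not> adj y w \<and> \<not> adj x w)" for x y z w
  proof
    assume a: "distinct [x,y,z,w] \<and> adj x y \<and> adj y z \<and> adj z w \<and> \<not> adj x z \<and> \<not> adj y w \<and> \<not> adj x w"
    have "gadget G 1 (\<lambda>p. [x,y,z,w] ! p)"
      by (rule gadget_P4[OF g]) (use a in \<open>simp_all add: adj_def\<close>)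
    then show False using nog by blast
  qed
  have no2K2: "\<not> (distinct [x,y,z,w] \<and> adj x y \<and> adj z w \<and> \<not> adj x z \<and> \<not> adj x w \<and> \<not> adj y z \<and> \<not> adj y w)" for x y z w
  proof
    assume a: "distinct [x,y,z,w] \<and> adj x y \<and> adj z w \<and> \<not> adj x z \<and> \<not> adj x w \<and> \<not> adj y z \<and> \<not> adj y w"
    have "gadget G 2 (\<lambda>p. [x,y,z,w] ! p)"
      by (rule gadget_2K2[OF g]) (use a in \<open>simp_all add: adj_def\<close>)
    then show False using nog by blast
  qed
  have "extended_biclique G"
  proof (cases "edges G = {}")
    case True
    then show ?thesis unfolding extended_biclique_def by (intro exI[of _ "{}"]) auto
  next
    case False
    then obtain e where "e \<in> edges G" by blast
    then obtain a b where ab: "e = {a,b}" "a \<noteq> b" using g unfolding is_graph_def by blast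
    have aab: "adj a b" using ab \<open>e \<in> edges G\<close> unfolding adj_def by simp
    define A where "A = {x \<in> verts G. adj x b}"
    define B where "B = {y \<in> verts G. adj a y}"
    have AB: "A \<inter> B = {}"
    proof (rule ccontr)
      assume "A \<inter> B \<noteq> {}"
      then obtain x where "adj x b" "adj a x" unfolding A_def B_def by blast
      then show False using notri[of a x b] aab by blast
    qed
    have claim: "(x \<in> A \<and> y \<in> B) \<or> (y \<in> A \<and> x \<in> B)" if xy: "adj x y" for x y
    proof -
      have xyV: "x \<in> verts G" "y \<in> verts G" "x \<noteq> y" using adjV[OF xy] by auto
      have aV: "a \<in> verts G" "b \<in> verts G" using adjV[OF aab] by auto
      consider "x = a" | "x = b" | "y = a" | "y = b" | "x \<noteq> a" "x \<noteq> b" "y \<noteq> a" "y \<noteq> b" by blast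
      then show ?thesis
      proof cases
        case 1 then show ?thesis using xy xyV aV aab unfolding A_def B_def by auto
      next
        case 2 then show ?thesis using xy xyV aV aab sym[of y b] unfolding A_def B_def by auto
      next
        case 3 then show ?thesis using xy xyV aV aab sym[of a x] unfolding A_def B_def by auto
      next
        case 4 then show ?thesis using xy xyV aV aab unfolding A_def B_def by auto
      next
        case 5
        have d: "distinct [x,y,a,b]" using 5 xyV ab by auto
        have some: "adj x a \<or> adj x b \<or> adj y a \<or> adj y b" using no2K2[of x y a b] d xy aab by blast
        have dd: "distinct [y,x,a,b]" "distinct [y,x,b,a]" "distinct [x,y,a,b]" "distinct [x,y,b,a]"
          using d by auto
        show ?thesis
        proof -
          have yx: "adj y x" using xy sym[of x y] by simp
          have ba: "adj b a" using aab sym[of a b] by simp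
          have c1: "adj x a \<Longrightarrow> adj y b" using noP4[of y x a b] dd notri[of x y a] notri[of x a b] yx xy aab by blast
          have c2: "adj x b \<Longrightarrow> adj y a" using noP4[of y x b a] dd notri[of x y b] notri[of x b a] yx xy ba by blast
          have c3: "adj y a \<Longrightarrow> adj x b" using noP4[of x y a b] dd notri[of y x a] notri[of y a b] yx xy aab by blast
          have c4: "adj y b \<Longrightarrow> adj x a" using noP4[of x y b a] dd notri[of y x b] notri[of y b a] yx xy ba by blast
          have s1: "adj x a \<Longrightarrow> adj a x" "adj y a \<Longrightarrow> adj a y" using sym[of x a] sym[of y a] by simp_all
          show ?thesis using some c1 c2 c3 c4 s1 xyV unfolding A_def B_def by blast
        qed
      qed
    qed
    have "edges G = {{x, y} |x y. x \<in> A \<and> y \<in> B}"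
    proof (intro set_eqI iffI)
      fix e' assume e': "e' \<in> edges G"
      then obtain x y where xy: "e' = {x,y}" using g unfolding is_graph_def by blast
      then have "adj x y" using e' unfolding adj_def by simp
      then have "(x \<in> A \<and> y \<in> B) \<or> (y \<in> A \<and> x \<in> B)" by (rule claim)
      then show "e' \<in> {{x, y} |x y. x \<in> A \<and> y \<in> B}" using xy by (auto simp: insert_commute)
    next
      fix e' assume "e' \<in> {{x, y} |x y. x \<in> A \<and> y \<in> B}"
      then obtain x y where xy: "e' = {x,y}" "x \<in> A" "y \<in> B" by blast
      have xb: "adj x b" and ya: "adj a y" using xy unfolding A_def B_def by auto
      have "adj x y"
      proof (rule ccontr)
        assume nxy: "\<not> adj x y"
        have "x \<noteq> y" using xy AB by auto
        show False
        proof (cases "x = a \<or> y = b")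
          case True then show False using nxy xb ya by auto
        next
          case False
          have d: "distinct [x,b,a,y]" using False \<open>x \<noteq> y\<close> adjV[OF xb] adjV[OF ya] ab by auto
          have ba: "adj b a" using aab sym[of a b] by simp
          have ay: "adj y a" using ya sym[of a y] by simp
          have "\<not> adj x a" using notri[of x a b] xb aab by blast
          moreover have "\<not> adj y b" using notri[of y a b] ay aab by blast
          then have "\<not> adj b y" using sym[of b y] by simp
          ultimately show False using noP4[of x b a y] d xb ya ba nxy by blast
        qed
      qed
      then show "e' \<in> edges G" using xy unfolding adj_def by simp
    qed
    moreover have "A \<union> B \<subseteq> verts G" unfolding A_def B_def by auto
    ultimately show ?thesis unfolding extended_biclique_def using AB by blast
  qed
  then show False using nb by simp
qed

lemma gadget_induced:
  assumes "gadget (induced_delete G X) \<tau> g"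
  shows "gadget G \<tau> g \<and> g ` {..<Lt \<tau>} \<inter> X = {}"
proof -
  have V: "g ` {..<Lt \<tau>} \<subseteq> verts G - X" using assms unfolding gadget_def induced_delete_def by simp
  have "\<forall>p<Lt \<tau>. \<forall>q<Lt \<tau>. p \<noteq> q \<longrightarrow> ({g p, g q} \<in> edges G \<longleftrightarrow> Wt \<tau> p q)"
  proof (intro allI impI)
    fix p q assume pq: "p < Lt \<tau>" "q < Lt \<tau>" "p \<noteq> q"
    have "g p \<notin> X" "g q \<notin> X" using V pq by auto
    then have "({g p, g q} \<in> edges (induced_delete G X)) = ({g p, g q} \<in> edges G)"
      unfolding induced_delete_def by auto
    then show "({g p, g q} \<in> edges G) = Wt \<tau> p q" using assms pq unfolding gadget_def by auto
  qed
  then show ?thesis using assms V unfolding gadget_def by auto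
qed

lemma Lt_le: "Lt \<tau> \<le> 4" by (simp add: Lt_def)

lemma greedy:
  assumes g: "is_graph G"
  shows "(\<exists>X\<subseteq>verts G. card X \<le> 4*k \<and> extended_biclique (induced_delete G X)) \<or>
         (\<exists>\<tau> gs. (\<forall>i<k. gadget G (\<tau> i) (gs i)) \<and>
            (\<forall>i<k. \<forall>j<k. i \<noteq> j \<longrightarrow> gs i ` {..<Lt (\<tau> i)} \<inter> gs j ` {..<Lt (\<tau> j)} = {}))"
proof (induction k)
  case 0 show ?case by (intro disjI2) blast
next
  case (Suc k)
  show ?case
  proof (cases "\<exists>X\<subseteq>verts G. card X \<le> 4*k \<and> extended_biclique (induced_delete G X)")
    case True
    then obtain X where "X \<subseteq> verts G" "card X \<le> 4*k" "extended_biclique (induced_delete G X)" by blast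
    moreover have "4*k \<le> 4 * Suc k" by simp
    ultimately show ?thesis by (meson order_trans)
  next
    case False
    with Suc.IH obtain \<tau> gs where gad: "\<forall>i<k. gadget G (\<tau> i) (gs i)"
      and dis: "\<forall>i<k. \<forall>j<k. i \<noteq> j \<longrightarrow> gs i ` {..<Lt (\<tau> i)} \<inter> gs j ` {..<Lt (\<tau> j)} = {}"
      by blast
    define X where "X = (\<Union>i<k. gs i ` {..<Lt (\<tau> i)})"
    have XV: "X \<subseteq> verts G" using gad unfolding gadget_def X_def by auto
    have cardX: "card X \<le> 4*k"
    proof -
      have "card X \<le> (\<Sum>i<k. card (gs i ` {..<Lt (\<tau> i)}))" unfolding X_def by (rule card_UN_le) simp
      also have "\<dots> \<le> (\<Sum>i<k. 4)"
      proof (rule sum_mono)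
        fix i show "card (gs i ` {..<Lt (\<tau> i)}) \<le> 4"
          using card_image_le[of "{..<Lt (\<tau> i)}" "gs i"] Lt_le[of "\<tau> i"] by simp
      qed
      finally show ?thesis by simp
    qed
    show ?thesis
    proof (cases "extended_biclique (induced_delete G X)")
      case True then show ?thesis using XV cardX by (intro disjI1 exI[of _ X]) auto
    next
      case False
      obtain \<tau>' g' where "gadget (induced_delete G X) \<tau>' g'"
        using obstruction[OF is_graph_induced_delete[OF g] False] by blast
      then have g1: "gadget G \<tau>' g'" and g2: "g' ` {..<Lt \<tau>'} \<inter> X = {}"
        using gadget_induced by blast+
      define \<tau>2 where "\<tau>2 = \<tau>(k := \<tau>')"
      define gs2 where "gs2 = gs(k := g')"
      have "\<forall>i<Suc k. gadget G (\<tau>2 i) (gs2 i)"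
        using gad g1 unfolding \<tau>2_def gs2_def by (auto simp: less_Suc_eq)
      moreover have "\<forall>i<Suc k. \<forall>j<Suc k. i \<noteq> j \<longrightarrow> gs2 i ` {..<Lt (\<tau>2 i)} \<inter> gs2 j ` {..<Lt (\<tau>2 j)} = {}"
      proof (intro allI impI)
        fix i j assume ij: "i < Suc k" "j < Suc k" "i \<noteq> j"
        show "gs2 i ` {..<Lt (\<tau>2 i)} \<inter> gs2 j ` {..<Lt (\<tau>2 j)} = {}"
        proof (cases "i = k")
          case True
          then have jk: "j < k" using ij by auto
          have sub: "gs j ` {..<Lt (\<tau> j)} \<subseteq> X" unfolding X_def using jk by auto
          have "gs2 i = g'" "\<tau>2 i = \<tau>'" "gs2 j = gs j" "\<tau>2 j = \<tau> j"
            using True jk unfolding \<tau>2_def gs2_def by auto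
          then show ?thesis using g2 sub by auto
        next
          case False
          note iF = False
          show ?thesis
          proof (cases "j = k")
            case True
            then have ik: "i < k" using ij iF by auto
            have sub: "gs i ` {..<Lt (\<tau> i)} \<subseteq> X" unfolding X_def using ik by auto
            have "gs2 j = g'" "\<tau>2 j = \<tau>'" "gs2 i = gs i" "\<tau>2 i = \<tau> i"
              using True ik unfolding \<tau>2_def gs2_def by auto
            then show ?thesis using g2 sub by auto
          next
            case False
            then show ?thesis using dis ij iF unfolding \<tau>2_def gs2_def by auto
          qed
        qed
      qed
      ultimately show ?thesis by blast
    qed
  qed
qed

lemma ramsey_ne:
  fixes n :: nat and Col :: "'a set"
  assumes fin: "finite Col" and ne: "Col \<noteq> {}"
  shows "\<exists>N::nat. \<forall>c::nat \<Rightarrow> nat \<Rightarrow> 'a. (\<forall>i j. i < j \<longrightarrow> j < N \<longrightarrow> c i j \<in> Col) \<longrightarrow>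
            (\<exists>\<iota> col. (\<forall>k l. k < l \<longrightarrow> l < n \<longrightarrow> \<iota> k < \<iota> l) \<and> (\<forall>k<n. \<iota> k < N) \<and>
               (\<forall>k l. k < l \<longrightarrow> l < n \<longrightarrow> c (\<iota> k) (\<iota> l) = col))"
proof -
  obtain h where h: "bij_betw h Col {0..<card Col}" using ex_bij_betw_finite_nat[OF fin] by blast
  define m where "m = card Col"
  obtain N :: nat where N: "partn_lst {..<N} (replicate m n) 2" using ramsey_full[of "replicate m n" 2] by blast
  show ?thesis
  proof (rule exI[of _ N], intro allI impI)
    fix c assume c: "\<forall>i j. i < j \<longrightarrow> j < N \<longrightarrow> c i j \<in> Col"
    define F where "F X = h (c (Min X) (Max X))" for X
    have F: "F \<in> nsets {..<N} 2 \<rightarrow> {..<m}"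
    proof
      fix X assume "X \<in> nsets {..<N} 2"
      then obtain a b where ab: "X = {a,b}" "a < b" "b < N"
        unfolding nsets_def by (auto simp: card_2_iff) (metis insert_commute lessThan_iff linorder_neqE_nat)
      then have "Min X = a" "Max X = b" by auto
      then have "c (Min X) (Max X) \<in> Col" using c ab by auto
      then show "F X \<in> {..<m}" using h unfolding F_def m_def bij_betw_def by auto
    qed
    obtain i H where i: "i < length (replicate m n)" and H: "H \<in> nsets {..<N} (replicate m n ! i)"
      and hom: "F ` (nsets H 2) \<subseteq> {i}"
      using partn_lstE[OF N F] by auto
    have Hn: "finite H" "card H = n" "H \<subseteq> {..<N}" using H i unfolding nsets_def by auto
    define \<iota> where "\<iota> k = sorted_list_of_set H ! k" for k
    have len: "length (sorted_list_of_set H) = n" using Hn by simp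
    have mono: "\<iota> k < \<iota> l" if "k < l" "l < n" for k l
    proof -
      have ss: "sorted_wrt (<) (sorted_list_of_set H)" by (rule strict_sorted_list_of_set)
      show ?thesis unfolding \<iota>_def using sorted_wrt_nth_less[OF ss that(1)] that(2) len by simp
    qed
    have inH: "\<iota> k \<in> H" if "k < n" for k
      unfolding \<iota>_def using that len Hn(1) by (metis nth_mem set_sorted_list_of_set)
    have hv: "h (c (\<iota> k) (\<iota> l)) = i" if kl: "k < l" "l < n" for k l
    proof -
      have "\<iota> k \<noteq> \<iota> l" using mono[OF kl] by simp
      then have "{\<iota> k, \<iota> l} \<in> nsets H 2" using inH kl by (auto simp: nsets_def)
      then have "F {\<iota> k, \<iota> l} \<in> F ` nsets H 2" by (rule imageI)
      then have "F {\<iota> k, \<iota> l} = i" using hom by blast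
      moreover have "Min {\<iota> k, \<iota> l} = \<iota> k" "Max {\<iota> k, \<iota> l} = \<iota> l" using mono[OF kl] by auto
      ultimately show ?thesis unfolding F_def by simp
    qed
    have inCol: "c (\<iota> k) (\<iota> l) \<in> Col" if kl: "k < l" "l < n" for k l
      using c mono[OF kl] inH kl Hn(3) by (meson lessThan_iff less_trans subsetD)
    have "\<forall>k l. k < l \<longrightarrow> l < n \<longrightarrow> c (\<iota> k) (\<iota> l) = inv_into Col h i"
      using hv inCol h unfolding bij_betw_def by (metis inv_into_f_f)
    moreover have "\<forall>k<n. \<iota> k < N" using inH Hn(3) by auto
    ultimately show "\<exists>\<iota> col. (\<forall>k l. k < l \<longrightarrow> l < n \<longrightarrow> \<iota> k < \<iota> l) \<and> (\<forall>k<n. \<iota> k < N) \<and>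
               (\<forall>k l. k < l \<longrightarrow> l < n \<longrightarrow> c (\<iota> k) (\<iota> l) = col)"
      using mono by blast
  qed
qed

lemma divh: assumes "d < (t::nat)" shows "(c*t+d) div t = c"
proof -
  have t0: "t \<noteq> 0" using assms by simp
  have "(d + t*c) div t = d div t + c" using t0 by simp
  then show ?thesis using assms by (simp add: add.commute mult.commute)
qed

lemma F1: assumes "c*t+d = c'*t+(d'::nat)" "d < t" "d' < t" shows "c = c' \<and> d = d'"
proof -
  have "c = c'" using divh[OF assms(2), of c] divh[OF assms(3), of c'] assms(1) by simp
  then show ?thesis using assms(1) by simp
qed

lemma F2: assumes "c < t" "d < (t::nat)" shows "c*t+d < t*t"
proof -
  have "c*t + d < c*t + t" using assms by simp
  also have "\<dots> = Suc c * t" by simp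
  also have "\<dots> \<le> t * t" using assms(1) by (intro mult_le_mono1) simp
  finally show ?thesis .
qed

definition Apat :: "(nat\<times>nat) set \<Rightarrow> (nat \<Rightarrow> nat \<Rightarrow> bool) \<Rightarrow> nat\<times>nat \<Rightarrow> nat\<times>nat \<Rightarrow> bool" where
  "Apat P W a b = (if fst a < fst b then (snd a, snd b) \<in> P
     else if fst b < fst a then (snd b, snd a) \<in> P else W (snd a) (snd b))"

definition ifam :: "(nat\<times>nat \<Rightarrow> nat\<times>nat \<Rightarrow> bool) \<Rightarrow> (nat\<times>nat) set \<Rightarrow> nat \<Rightarrow> (nat \<Rightarrow> (nat\<times>nat) set) \<Rightarrow> (nat \<Rightarrow> nat \<Rightarrow> bool) \<Rightarrow> bool" where
 "ifam A D m T R \<longleftrightarrow> (\<forall>c<m. T c \<subseteq> D \<and> T c \<noteq> {} \<and> (\<forall>a\<in>T c. \<forall>b\<in>T c. a \<noteq> b \<longrightarrow> \<not> A a b)) \<and>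
    (\<forall>c<m. \<forall>d<m. c \<noteq> d \<longrightarrow> T c \<inter> T d = {}) \<and>
    (\<forall>c<m. \<forall>d<m. c \<noteq> d \<longrightarrow> ((\<exists>a\<in>T c. \<exists>b\<in>T d. A a b) \<longleftrightarrow> R c d))"

lemma ifam_qfam:
  assumes g: "is_graph G" and inj: "inj_on v D" and vD: "v ` D \<subseteq> verts G"
    and hA: "\<forall>a\<in>D. \<forall>b\<in>D. a \<noteq> b \<longrightarrow> ({v a, v b} \<in> edges G \<longleftrightarrow> A a b)"
    and f: "ifam A D m T R"
  shows "qfam G m (\<lambda>c. v ` T c) R"
proof -
  note f' = f[unfolded ifam_def]
  have f1: "\<forall>c<m. T c \<subseteq> D \<and> T c \<noteq> {} \<and> (\<forall>a\<in>T c. \<forall>b\<in>T c. a \<noteq> b \<longrightarrow> \<not> A a b)"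
    using f'[THEN conjunct1] .
  have f2: "\<forall>c<m. \<forall>d<m. c \<noteq> d \<longrightarrow> T c \<inter> T d = {}" using f'[THEN conjunct2, THEN conjunct1] .
  have f3: "\<forall>c<m. \<forall>d<m. c \<noteq> d \<longrightarrow> ((\<exists>a\<in>T c. \<exists>b\<in>T d. A a b) \<longleftrightarrow> R c d)"
    using f'[THEN conjunct2, THEN conjunct2] .
  have TD: "\<And>c. c < m \<Longrightarrow> T c \<subseteq> D" using f1 by blast
  have Tne: "\<And>c. c < m \<Longrightarrow> T c \<noteq> {}" using f1 by blast
  have Tind: "\<And>c a b. c < m \<Longrightarrow> a \<in> T c \<Longrightarrow> b \<in> T c \<Longrightarrow> a \<noteq> b \<Longrightarrow> \<not> A a b" using f1 by blast
  have Tdis: "\<And>c d. c < m \<Longrightarrow> d < m \<Longrightarrow> c \<noteq> d \<Longrightarrow> T c \<inter> T d = {}" using f2 by blast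
  have Tadj: "\<And>c d. c < m \<Longrightarrow> d < m \<Longrightarrow> c \<noteq> d \<Longrightarrow> ((\<exists>a\<in>T c. \<exists>b\<in>T d. A a b) \<longleftrightarrow> R c d)"
    using f3 by blast
  have hA': "\<And>a b. a \<in> D \<Longrightarrow> b \<in> D \<Longrightarrow> a \<noteq> b \<Longrightarrow> ({v a, v b} \<in> edges G \<longleftrightarrow> A a b)"
    using hA by blast
  have p1: "v ` T c \<noteq> {} \<and> v ` T c \<subseteq> verts G \<and> (\<forall>x\<in>v ` T c. \<forall>y\<in>v ` T c. {x,y} \<notin> edges G)" if c: "c < m" for c
  proof (intro conjI ballI)
    show "v ` T c \<noteq> {}" using Tne[OF c] by simp
    show "v ` T c \<subseteq> verts G" using TD[OF c] vD by auto
    fix x y assume "x \<in> v ` T c" "y \<in> v ` T c"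
    then obtain a b where ab: "a \<in> T c" "b \<in> T c" "x = v a" "y = v b" by auto
    show "{x,y} \<notin> edges G"
    proof (cases "a = b")
      case True then show ?thesis using ab is_graph_single[OF g, of x] by simp
    next
      case False
      have "a \<in> D" "b \<in> D" using ab TD[OF c] by auto
      then show ?thesis using hA'[of a b] Tind[OF c ab(1,2) False] ab(3,4) False by simp
    qed
  qed
  have p2: "v ` T c \<inter> v ` T d = {}" if cd: "c < m" "d < m" "c \<noteq> d" for c d
    using inj_on_image_Int[OF inj TD[OF cd(1)] TD[OF cd(2)]] Tdis[OF cd] by simp
  have p3: "(\<exists>x\<in>v ` T c. \<exists>y\<in>v ` T d. {x,y} \<in> edges G) \<longleftrightarrow> R c d" if cd: "c < m" "d < m" "c \<noteq> d" for c d
  proof -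
    have "(\<exists>x\<in>v ` T c. \<exists>y\<in>v ` T d. {x,y} \<in> edges G) \<longleftrightarrow> (\<exists>a\<in>T c. \<exists>b\<in>T d. A a b)"
    proof
      assume "\<exists>x\<in>v ` T c. \<exists>y\<in>v ` T d. {x,y} \<in> edges G"
      then obtain a b where ab: "a \<in> T c" "b \<in> T d" "{v a, v b} \<in> edges G" by blast
      then have "a \<noteq> b" using Tdis[OF cd] by blast
      moreover have "a \<in> D" "b \<in> D" using ab TD cd by auto
      ultimately show "\<exists>a\<in>T c. \<exists>b\<in>T d. A a b" using ab hA'[of a b] by blast
    next
      assume "\<exists>a\<in>T c. \<exists>b\<in>T d. A a b"
      then obtain a b where ab: "a \<in> T c" "b \<in> T d" "A a b" by blast
      then have "a \<noteq> b" using Tdis[OF cd] by blast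
      moreover have "a \<in> D" "b \<in> D" using ab TD cd by auto
      ultimately show "\<exists>x\<in>v ` T c. \<exists>y\<in>v ` T d. {x,y} \<in> edges G" using ab hA'[of a b] by blast
    qed
    then show ?thesis using Tadj[OF cd] by simp
  qed
  show ?thesis unfolding qfam_def
  proof (intro conjI)
    show "\<forall>c<m. v ` T c \<noteq> {} \<and> v ` T c \<subseteq> verts G \<and> (\<forall>x\<in>v ` T c. \<forall>y\<in>v ` T c. {x, y} \<notin> edges G)"
      using p1 by blast
    show "\<forall>c<m. \<forall>d<m. c \<noteq> d \<longrightarrow> v ` T c \<inter> v ` T d = {}" using p2 by blast
    show "\<forall>c<m. \<forall>d<m. c \<noteq> d \<longrightarrow> (\<exists>x\<in>v ` T c. \<exists>y\<in>v ` T d. {x, y} \<in> edges G) = R c d"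
      using p3 by blast
  qed
qed

lemma caseC1:
  assumes "p < L" "(p,p) \<in> P" "t \<le> n"
  shows "ifam (Apat P W) ({..<n}\<times>{..<L}) t (\<lambda>c. {(c,p)}) (\<lambda>_ _. True)"
  unfolding ifam_def
proof (intro conjI allI impI)
  fix c d assume "c < t" "d < t" "c \<noteq> d"
  then show "(\<exists>a\<in>{(c, p)}. \<exists>b\<in>{(d, p)}. Apat P W a b) = True"
    using assms by (auto simp: Apat_def)
qed (use assms in auto)

lemma caseC2:
  assumes "p < L" "q < L" "(p,q) \<in> P" "(q,p) \<notin> P" "2*t \<le> n"
  shows "ifam (Apat P W) ({..<n}\<times>{..<L}) t (\<lambda>c. {(2*c,q), (2*c+1,p)}) (\<lambda>_ _. True)"
  unfolding ifam_def
proof (intro conjI allI impI ballI)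
  fix c assume c: "c < t"
  show "{(2*c,q), (2*c+1,p)} \<subseteq> {..<n}\<times>{..<L}" using c assms by auto
  show "{(2*c,q), (2*c+1,p)} \<noteq> {}" by simp
  fix a b assume "a \<in> {(2*c,q), (2*c+1,p)}" "b \<in> {(2*c,q), (2*c+1,p)}" "a \<noteq> b"
  then show "\<not> Apat P W a b" using assms by (auto simp: Apat_def)
next
  fix c d assume "c < t" "d < t" "c \<noteq> d"
  then show "{(2*c,q), (2*c+1,p)} \<inter> {(2*d,q), (2*d+1,p)} = {}" by auto
next
  fix c d assume cd: "c < t" "d < t" "c \<noteq> d"
  show "(\<exists>a\<in>{(2*c,q), (2*c+1,p)}. \<exists>b\<in>{(2*d,q), (2*d+1,p)}. Apat P W a b) = True"
  proof (cases "c < d")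
    case True
    then have "Apat P W (2*c+1,p) (2*d,q)" using assms by (simp add: Apat_def)
    then show ?thesis by blast
  next
    case False
    then have "d < c" using cd by simp
    then have "Apat P W (2*c,q) (2*d+1,p)" using assms by (simp add: Apat_def)
    then show ?thesis by blast
  qed
qed

lemma caseC3:
  assumes "p < L" "q < L" "p \<noteq> q" "(p,q) \<in> P" "(q,p) \<in> P" "\<not> W p q" "\<not> W q p" "t \<le> n"
  shows "ifam (Apat P W) ({..<n}\<times>{..<L}) t (\<lambda>c. {(c,p), (c,q)}) (\<lambda>_ _. True)"
  unfolding ifam_def
proof (intro conjI allI impI ballI)
  fix c assume c: "c < t"
  show "{(c,p), (c,q)} \<subseteq> {..<n}\<times>{..<L}" using c assms by auto
  show "{(c,p), (c,q)} \<noteq> {}" by simp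
  fix a b assume "a \<in> {(c,p), (c,q)}" "b \<in> {(c,p), (c,q)}" "a \<noteq> b"
  then show "\<not> Apat P W a b" using assms by (auto simp: Apat_def)
next
  fix c d assume "c < t" "d < t" "c \<noteq> d"
  then show "{(c,p), (c,q)} \<inter> {(d,p), (d,q)} = {}" by auto
next
  fix c d assume cd: "c < t" "d < t" "c \<noteq> d"
  show "(\<exists>a\<in>{(c,p), (c,q)}. \<exists>b\<in>{(d,p), (d,q)}. Apat P W a b) = True"
  proof (cases "c < d")
    case True
    then have "Apat P W (c,p) (d,q)" using assms by (simp add: Apat_def)
    then show ?thesis by blast
  next
    case False
    then have "d < c" using cd by simp
    then have "Apat P W (c,p) (d,q)" using assms by (simp add: Apat_def)
    then show ?thesis by blast
  qed
qed

definition T4 :: "nat \<Rightarrow> nat \<Rightarrow> nat \<Rightarrow> nat \<Rightarrow> (nat\<times>nat) set" where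
  "T4 t p q c = {(t*t+c, p)} \<union> (\<lambda>d. (c*t+d, p)) ` {d. c < d \<and> d < t} \<union> (\<lambda>d. (d*t+c, q)) ` {..<c}"

lemma caseC4:
  assumes "p < L" "q < L" "p \<noteq> q" "(p,q) \<notin> P" "(q,p) \<notin> P" "(p,p) \<notin> P" "(q,q) \<notin> P"
    "W p q" "W q p" "\<not> W p p" "\<not> W q q" "t*t + t \<le> n"
  shows "ifam (Apat P W) ({..<n}\<times>{..<L}) t (T4 t p q) (\<lambda>_ _. True)"
proof -
  have nP: "x \<in> {p,q} \<Longrightarrow> y \<in> {p,q} \<Longrightarrow> (x,y) \<notin> P" for x y using assms(4-7) by blast
  have W': "x \<in> {p,q} \<Longrightarrow> y \<in> {p,q} \<Longrightarrow> W x y \<longleftrightarrow> x \<noteq> y" for x y using assms(3,8-11) by blast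
  have A: "Apat P W a b \<longleftrightarrow> fst a = fst b \<and> snd a \<noteq> snd b"
    if "snd a \<in> {p,q}" "snd b \<in> {p,q}" for a b
    unfolding Apat_def using nP[OF that] nP[OF that(2,1)] W'[OF that] by auto
  have Tpos: "snd a \<in> {p,q}" if "a \<in> T4 t p q c" for a c using that unfolding T4_def by auto
  have T4D: "T4 t p q c \<subseteq> {..<n}\<times>{..<L}" if c: "c < t" for c
  proof
    fix a assume a: "a \<in> T4 t p q c"
    have "fst a < t*t + t"
    proof -
      consider "a = (t*t+c, p)" | d where "a = (c*t+d, p)" "c < d" "d < t" | d where "a = (d*t+c, q)" "d < c"
        using a unfolding T4_def by auto
      then show ?thesis
      proof cases
        case 1 then show ?thesis using c by simp
      next
        case 2 then show ?thesis using F2[OF c 2(3)] by simp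
      next
        case 3 then show ?thesis using F2[of d t c] c by simp
      qed
    qed
    then show "a \<in> {..<n}\<times>{..<L}" using Tpos[OF a] assms by (cases a) auto
  qed
  have same: "a = b" if ab: "a \<in> T4 t p q c" "b \<in> T4 t p q c" "fst a = fst b" "c < t"
    and pos: "snd a = p \<longrightarrow> snd b = q \<longrightarrow> False" for a b c
  proof -
    from ab(1) consider "a = (t*t+c, p)" | e where "a = (c*t+e, p)" "c < e" "e < t" | e where "a = (e*t+c, q)" "e < c"
      unfolding T4_def by auto
    note ca = this
    from ab(2) consider "b = (t*t+c, p)" | e where "b = (c*t+e, p)" "c < e" "e < t" | e where "b = (e*t+c, q)" "e < c"
      unfolding T4_def by auto
    note cb = this
    show ?thesis
    proof (cases rule: ca)
      case 1
      show ?thesis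
      proof (cases rule: cb)
        case 1 then show ?thesis using \<open>a = _\<close> ab(3) by simp
      next
        case (2 e) then show ?thesis using \<open>a = (t*t+c, p)\<close> ab(3) F2[of c t e] ab(4) by simp
      next
        case (3 e) then show ?thesis using \<open>a = (t*t+c, p)\<close> pos by simp
      qed
    next
      case (2 e)
      show ?thesis
      proof (cases rule: cb)
        case 1 then show ?thesis using 2 ab(3) F2[of c t e] ab(4) by simp
      next
        case (2 e') then show ?thesis using \<open>a = (c*t+e, p)\<close> \<open>e < t\<close> ab(3) F1[of c t e c e'] by auto
      next
        case (3 e') then show ?thesis using \<open>a = (c*t+e, p)\<close> pos by simp
      qed
    next
      case (3 e)
      show ?thesis
      proof (cases rule: cb)
        case 1 then show ?thesis using 3 ab(3) F2[of e t c] ab(4) by simp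
      next
        case (2 e') then show ?thesis using 3 ab(3) F1[of e t c c e'] ab(4) by auto
      next
        case (3 e') then show ?thesis using \<open>a = (e*t+c, q)\<close> \<open>e < c\<close> ab(3,4) F1[of e t c e' c] by auto
      qed
    qed
  qed
  show ?thesis
    unfolding ifam_def
  proof (intro conjI allI impI ballI)
    fix c assume c: "c < t"
    show "T4 t p q c \<subseteq> {..<n}\<times>{..<L}" using T4D[OF c] .
    show "T4 t p q c \<noteq> {}" unfolding T4_def by simp
    fix a b assume ab: "a \<in> T4 t p q c" "b \<in> T4 t p q c" "a \<noteq> b"
    show "\<not> Apat P W a b"
    proof
      assume "Apat P W a b"
      then have fab: "fst a = fst b" "snd a \<noteq> snd b" using A Tpos ab by auto
      show False
      proof (cases "snd a = p")
        case True
        then have "snd b = q" using fab Tpos[OF ab(2)] by auto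
        have "b = a" using same[OF ab(2) ab(1) fab(1)[symmetric] c] \<open>snd b = q\<close> assms(3) by auto
        then show False using ab(3) by simp
      next
        case False
        then have "snd b = p" using fab Tpos[OF ab(1)] Tpos[OF ab(2)] by auto
        have "a = b" using same[OF ab(1) ab(2) fab(1) c] \<open>snd b = p\<close> False assms(3) Tpos[OF ab(1)] by auto
        then show False using ab(3) by simp
      qed
    qed
  next
    fix c d assume cd: "c < t" "d < t" "c \<noteq> d"
    show "T4 t p q c \<inter> T4 t p q d = {}"
    proof (rule ccontr)
      assume "T4 t p q c \<inter> T4 t p q d \<noteq> {}"
      then obtain a where a: "a \<in> T4 t p q c" "a \<in> T4 t p q d" by blast
      from a(1) consider "a = (t*t+c, p)" | e where "a = (c*t+e, p)" "c < e" "e < t" | e where "a = (e*t+c, q)" "e < c"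
        unfolding T4_def by auto
      note ca = this
      from a(2) consider "a = (t*t+d, p)" | e where "a = (d*t+e, p)" "d < e" "e < t" | e where "a = (e*t+d, q)" "e < d"
        unfolding T4_def by auto
      note cb = this
      show False
      proof (cases rule: ca)
        case 1
        then show False
        proof (cases rule: cb)
          case 1 then show False using \<open>a = (t*t+c, p)\<close> cd by simp
        next
          case (2 e) then show False using \<open>a = (t*t+c, p)\<close> F2[of d t e] cd by simp
        next
          case (3 e) then show False using \<open>a = (t*t+c, p)\<close> assms(3) by simp
        qed
      next
        case (2 e)
        then show False
        proof (cases rule: cb)
          case 1 then show False using 2 F2[of c t e] cd by simp
        next
          case (2 e') then show False using \<open>a = (c*t+e, p)\<close> \<open>e < t\<close> F1[of c t e d e'] cd by auto
        next
          case (3 e') then show False using \<open>a = (c*t+e, p)\<close> assms(3) by simp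
        qed
      next
        case (3 e)
        then show False
        proof (cases rule: cb)
          case 1 then show False using 3 assms(3) by simp
        next
          case (2 e') then show False using 3 assms(3) by simp
        next
          case (3 e') then show False using \<open>a = (e*t+c, q)\<close> \<open>e < c\<close> F1[of e t c e' d] cd by auto
        qed
      qed
    qed
  next
    fix c d assume cd: "c < t" "d < t" "c \<noteq> d"
    show "(\<exists>a\<in>T4 t p q c. \<exists>b\<in>T4 t p q d. Apat P W a b) = True"
    proof (cases "c < d")
      case True
      have "(c*t+d, p) \<in> T4 t p q c" "(c*t+d, q) \<in> T4 t p q d" unfolding T4_def using True cd by auto
      moreover have "Apat P W (c*t+d, p) (c*t+d, q)" using assms by (simp add: Apat_def)
      ultimately show ?thesis by blast
    next
      case False
      then have dc: "d < c" using cd by simp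
      have "(d*t+c, q) \<in> T4 t p q c" "(d*t+c, p) \<in> T4 t p q d" unfolding T4_def using dc cd by auto
      moreover have "Apat P W (d*t+c, q) (d*t+c, p)" using assms by (simp add: Apat_def)
      ultimately show ?thesis by blast
    qed
  qed
qed

lemma Wt_sym: "Wt \<tau> p q = Wt \<tau> q p" by (auto simp: Wt_def)
lemma Wt_irr: "\<not> Wt \<tau> p p" by (auto simp: Wt_def)

lemma blowup_ifam:
  assumes s: "0 < s"
    and U1: "\<And>\<pi> r. \<pi> < 3 \<Longrightarrow> r < s \<Longrightarrow> U \<pi> r \<subseteq> D \<and> U \<pi> r \<noteq> {} \<and> (\<forall>a\<in>U \<pi> r. \<forall>b\<in>U \<pi> r. a \<noteq> b \<longrightarrow> \<not> A a b)"
    and U2: "\<And>\<pi> r \<pi>' r'. \<pi> < 3 \<Longrightarrow> r < s \<Longrightarrow> \<pi>' < 3 \<Longrightarrow> r' < s \<Longrightarrow> (\<pi>,r) \<noteq> (\<pi>',r') \<Longrightarrow>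
               U \<pi> r \<inter> U \<pi>' r' = {} \<and> ((\<exists>a\<in>U \<pi> r. \<exists>b\<in>U \<pi>' r'. A a b) \<longleftrightarrow> \<pi> \<noteq> \<pi>')"
  shows "ifam A D (3*s) (\<lambda>c. U (c div s) (c mod s)) (\<lambda>c d. c div s \<noteq> d div s)"
proof -
  have dm1: "c div s < 3" if "c < 3*s" for c
    using that s by (simp add: div_less_iff_less_mult)
  have dm2: "c mod s < s" for c using s by simp
  have ne: "(c div s, c mod s) \<noteq> (d div s, d mod s)" if "c \<noteq> d" for c d
    using that by (metis div_mult_mod_eq prod.inject)
  have h1: "\<forall>c<3*s. U (c div s) (c mod s) \<subseteq> D \<and> U (c div s) (c mod s) \<noteq> {} \<and>
      (\<forall>a\<in>U (c div s) (c mod s). \<forall>b\<in>U (c div s) (c mod s). a \<noteq> b \<longrightarrow> \<not> A a b)"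
  proof (intro allI impI)
    fix c assume c: "c < 3*s"
    show "U (c div s) (c mod s) \<subseteq> D \<and> U (c div s) (c mod s) \<noteq> {} \<and>
      (\<forall>a\<in>U (c div s) (c mod s). \<forall>b\<in>U (c div s) (c mod s). a \<noteq> b \<longrightarrow> \<not> A a b)"
      using U1[OF dm1[OF c] dm2] .
  qed
  have h2: "\<forall>c<3*s. \<forall>d<3*s. c \<noteq> d \<longrightarrow> U (c div s) (c mod s) \<inter> U (d div s) (d mod s) = {}"
  proof (intro allI impI)
    fix c d assume cd: "c < 3*s" "d < 3*s" "c \<noteq> d"
    show "U (c div s) (c mod s) \<inter> U (d div s) (d mod s) = {}"
      using U2[OF dm1[OF cd(1)] dm2 dm1[OF cd(2)] dm2 ne[OF cd(3)]] by blast
  qed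
  have h3: "\<forall>c<3*s. \<forall>d<3*s. c \<noteq> d \<longrightarrow> ((\<exists>a\<in>U (c div s) (c mod s). \<exists>b\<in>U (d div s) (d mod s). A a b) = (c div s \<noteq> d div s))"
  proof (intro allI impI)
    fix c d assume cd: "c < 3*s" "d < 3*s" "c \<noteq> d"
    show "(\<exists>a\<in>U (c div s) (c mod s). \<exists>b\<in>U (d div s) (d mod s). A a b) = (c div s \<noteq> d div s)"
      using U2[OF dm1[OF cd(1)] dm2 dm1[OF cd(2)] dm2 ne[OF cd(3)]] by blast
  qed
  show ?thesis unfolding ifam_def by (rule conjI[OF h1 conjI[OF h2 h3]])
qed

lemma less3: "(\<pi>::nat) < 3 \<Longrightarrow> \<pi> = 0 \<or> \<pi> = 1 \<or> \<pi> = 2" by auto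

definition U0 :: "nat \<Rightarrow> nat \<Rightarrow> (nat\<times>nat) set" where "U0 \<pi> r = {(r, \<pi>)}"
definition U1 :: "nat \<Rightarrow> nat \<Rightarrow> (nat\<times>nat) set" where
  "U1 \<pi> r = (if \<pi> = 0 then {(r,0),(r,3)} else if \<pi> = 1 then {(r,1)} else {(r,2)})"
definition U2 :: "nat \<Rightarrow> nat \<Rightarrow> nat \<Rightarrow> (nat\<times>nat) set" where
  "U2 s \<pi> r = (if \<pi> = 0 then {(r,0),(r,2)} else if \<pi> = 1 then {(r,1),(s+r,2)} else {(s+r,0),(r,3)})"

definition Ut :: "nat \<Rightarrow> nat \<Rightarrow> nat \<Rightarrow> nat \<Rightarrow> (nat\<times>nat) set" where
  "Ut \<tau> s \<pi> r = (if \<tau> = 0 then U0 \<pi> r else if \<tau> = 1 then U1 \<pi> r else U2 s \<pi> r)"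

lemma Ut_ok1:
  assumes "\<tau> < 3" "\<pi> < 3" "r < s" "2*s \<le> n"
  shows "Ut \<tau> s \<pi> r \<subseteq> {..<n}\<times>{..<Lt \<tau>} \<and> Ut \<tau> s \<pi> r \<noteq> {} \<and>
     (\<forall>a\<in>Ut \<tau> s \<pi> r. \<forall>b\<in>Ut \<tau> s \<pi> r. a \<noteq> b \<longrightarrow> \<not> Wt \<tau> (snd a) (snd b))"
  using less3[OF assms(1)] less3[OF assms(2)] assms(3,4)
  by (auto simp: Ut_def U0_def U1_def U2_def Lt_def Wt_def)

lemma Ut_ok2:
  assumes "\<tau> < 3" "\<pi> < 3" "r < s" "\<pi>' < 3" "r' < s" "(\<pi>,r) \<noteq> (\<pi>',r')"
  shows "Ut \<tau> s \<pi> r \<inter> Ut \<tau> s \<pi>' r' = {} \<and>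
     ((\<exists>a\<in>Ut \<tau> s \<pi> r. \<exists>b\<in>Ut \<tau> s \<pi>' r'. Wt \<tau> (snd a) (snd b)) \<longleftrightarrow> \<pi> \<noteq> \<pi>')"
  using less3[OF assms(1)] less3[OF assms(2)] less3[OF assms(4)] assms(3,5,6)
  by (auto simp: Ut_def U0_def U1_def U2_def Wt_def)

lemma analysis:
  assumes g: "is_graph G" and \<tau>: "\<tau> < 3" and inj: "inj_on v D" and vD: "v ` D \<subseteq> verts G"
    and Ddef: "D = {..<n} \<times> {..<Lt \<tau>}"
    and hadj: "\<forall>a\<in>D. \<forall>b\<in>D. a \<noteq> b \<longrightarrow> ({v a, v b} \<in> edges G \<longleftrightarrow> Apat P (Wt \<tau>) a b)"
    and n: "t*t + 2*t + 2*s \<le> n" and s: "0 < s"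
  shows "(\<exists>C. qfam G t C (\<lambda>_ _. True)) \<or> (\<exists>C. qfam G (3*s) C (\<lambda>c d. c div s \<noteq> d div s))"
proof -
  define L where "L = Lt \<tau>"
  define W where "W = Wt \<tau>"
  have DL: "D = {..<n} \<times> {..<L}" using Ddef L_def by simp
  have hadjW: "\<forall>a\<in>D. \<forall>b\<in>D. a \<noteq> b \<longrightarrow> ({v a, v b} \<in> edges G \<longleftrightarrow> Apat P W a b)"
    using hadj W_def by simp
  have Kt: "\<exists>C. qfam G t C (\<lambda>_ _. True)" if "ifam (Apat P W) D t T (\<lambda>_ _. True)" for T
    using ifam_qfam[OF g inj vD hadjW that] by blast
  have tn: "t \<le> n" "2*t \<le> n" "t*t + t \<le> n" "2*s \<le> n" using n by auto
  have Wsym: "W p q = W q p" for p q unfolding W_def by (rule Wt_sym)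
  have Wirr: "\<not> W p p" for p unfolding W_def by (rule Wt_irr)
  show ?thesis
  proof (cases "\<exists>p<L. (p,p) \<in> P")
    case True
    then obtain p where p: "p < L" "(p,p) \<in> P" by blast
    have "ifam (Apat P W) D t (\<lambda>c. {(c,p)}) (\<lambda>_ _. True)"
      unfolding DL by (rule caseC1[OF p tn(1)])
    then show ?thesis using Kt by blast
  next
    case nC1: False
    show ?thesis
    proof (cases "\<exists>p<L. \<exists>q<L. (p,q) \<in> P \<and> (q,p) \<notin> P")
      case True
      then obtain p q where pq: "p < L" "q < L" "(p,q) \<in> P" "(q,p) \<notin> P" by blast
      have "ifam (Apat P W) D t (\<lambda>c. {(2*c,q), (2*c+1,p)}) (\<lambda>_ _. True)"
        unfolding DL by (rule caseC2[OF pq tn(2)])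
      then show ?thesis using Kt by blast
    next
      case nC2: False
      show ?thesis
      proof (cases "\<exists>p<L. \<exists>q<L. p \<noteq> q \<and> (p,q) \<in> P \<and> (q,p) \<in> P \<and> \<not> W p q")
        case True
        then obtain p q where pq: "p < L" "q < L" "p \<noteq> q" "(p,q) \<in> P" "(q,p) \<in> P" "\<not> W p q" by blast
        have nq: "\<not> W q p" using pq(6) Wsym by simp
        have "ifam (Apat P W) D t (\<lambda>c. {(c,p), (c,q)}) (\<lambda>_ _. True)"
          unfolding DL by (rule caseC3[OF pq nq tn(1)])
        then show ?thesis using Kt by blast
      next
        case nC3: False
        show ?thesis
        proof (cases "\<exists>p<L. \<exists>q<L. p \<noteq> q \<and> (p,q) \<notin> P \<and> (q,p) \<notin> P \<and> W p q")
          case True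
          then obtain p q where pq: "p < L" "q < L" "p \<noteq> q" "(p,q) \<notin> P" "(q,p) \<notin> P" "W p q" by blast
          have more: "(p,p) \<notin> P" "(q,q) \<notin> P" "W q p" "\<not> W p p" "\<not> W q q"
            using nC1 pq Wsym Wirr by auto
          have "ifam (Apat P W) D t (T4 t p q) (\<lambda>_ _. True)"
            unfolding DL by (rule caseC4[OF pq(1-5) more(1,2) pq(6) more(3-5) tn(3)])
          then show ?thesis using Kt by blast
        next
          case nC4: False
          have Pchar: "(p,q) \<in> P \<longleftrightarrow> W p q" if pq: "p < L" "q < L" for p q
          proof (cases "p = q")
            case True then show ?thesis using nC1 pq Wirr by auto
          next
            case False
            show ?thesis
            proof
              assume "(p,q) \<in> P"
              then have "(q,p) \<in> P" using nC2 pq by blast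
              then show "W p q" using nC3 pq False \<open>(p,q) \<in> P\<close> by blast
            next
              assume w: "W p q"
              show "(p,q) \<in> P"
              proof (rule ccontr)
                assume np: "(p,q) \<notin> P"
                then have "(q,p) \<notin> P" using nC2 pq by blast
                then show False using nC4 pq False np w by blast
              qed
            qed
          qed
          have blow: "\<forall>a\<in>D. \<forall>b\<in>D. a \<noteq> b \<longrightarrow> ({v a, v b} \<in> edges G \<longleftrightarrow> W (snd a) (snd b))"
          proof (intro ballI impI)
            fix a b assume ab: "a \<in> D" "b \<in> D" "a \<noteq> b"
            have pos: "snd a < L" "snd b < L" using ab DL by auto
            have "Apat P W a b \<longleftrightarrow> W (snd a) (snd b)"
              unfolding Apat_def using Pchar[OF pos] Pchar[OF pos(2,1)] Wsym[of "snd a" "snd b"] by auto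
            then show "({v a, v b} \<in> edges G \<longleftrightarrow> W (snd a) (snd b))" using hadjW ab by blast
          qed
          have "ifam (\<lambda>a b. W (snd a) (snd b)) D (3*s) (\<lambda>c. Ut \<tau> s (c div s) (c mod s)) (\<lambda>c d. c div s \<noteq> d div s)"
          proof (rule blowup_ifam[OF s])
            fix \<pi> r :: nat assume "\<pi> < 3" "r < s"
            then show "Ut \<tau> s \<pi> r \<subseteq> D \<and> Ut \<tau> s \<pi> r \<noteq> {} \<and> (\<forall>a\<in>Ut \<tau> s \<pi> r. \<forall>b\<in>Ut \<tau> s \<pi> r. a \<noteq> b \<longrightarrow> \<not> W (snd a) (snd b))"
              using Ut_ok1[OF \<tau> _ _ tn(4)] unfolding Ddef W_def by blast
          next
            fix \<pi> r \<pi>' r' :: nat assume "\<pi> < 3" "r < s" "\<pi>' < 3" "r' < s" "(\<pi>, r) \<noteq> (\<pi>', r')"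
            then show "Ut \<tau> s \<pi> r \<inter> Ut \<tau> s \<pi>' r' = {} \<and> ((\<exists>a\<in>Ut \<tau> s \<pi> r. \<exists>b\<in>Ut \<tau> s \<pi>' r'. W (snd a) (snd b)) \<longleftrightarrow> \<pi> \<noteq> \<pi>')"
              using Ut_ok2[OF \<tau>] unfolding W_def by blast
          qed
          then show ?thesis using ifam_qfam[OF g inj vD blow] by blast
        qed
      qed
    qed
  qed
qed

lemma cg_edges: "c < t \<Longrightarrow> d < t \<Longrightarrow> ({c,d} \<in> edges (complete_graph t) \<longleftrightarrow> c \<noteq> d \<and> True)"
  unfolding complete_graph_def by (auto simp: doubleton_eq_iff)

lemma ct_edges: "c < 3*s \<Longrightarrow> d < 3*s \<Longrightarrow>
   ({c,d} \<in> edges (complete_tripartite s) \<longleftrightarrow> c \<noteq> d \<and> c div s \<noteq> d div s)"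
  unfolding complete_tripartite_def by (auto simp: doubleton_eq_iff)

lemma cg_verts: "verts (complete_graph t) = {0..<t}" by (simp add: complete_graph_def)
lemma ct_verts: "verts (complete_tripartite s) = {0..<3*s}" by (simp add: complete_tripartite_def)

lemma contains_from_qfam:
  assumes H: "H \<in> \<H>" and pc: "projection_closed \<H>" and g: "is_graph H"
    and q: "qfam H m C R" and vK: "verts K = {0..<m}"
    and eK: "\<forall>c<m. \<forall>d<m. ({c,d} \<in> edges K \<longleftrightarrow> c \<noteq> d \<and> R c d)"
  shows "contains \<H> K"
proof -
  obtain H' where "is_projection H' H" "graph_iso H' K" using qfam_proj[OF g q vK eK] by blast
  moreover have "H' \<in> \<H>" using pc H calculation(1) unfolding projection_closed_def by blast
  ultimately show ?thesis unfolding contains_def by blast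
qed

theorem theorem1p14:
  fixes \<H> :: "graph set"
  assumes "graph_class \<H>" and "projection_closed \<H>"
  shows "(\<forall>t\<ge>1. contains \<H> (complete_graph t))
       \<or> (\<forall>t\<ge>1. contains \<H> (complete_tripartite t))
       \<or> (\<exists>\<mu>::nat. \<forall>H\<in>\<H>. dist_ext_biclique_le H \<mu>)"
proof (rule ccontr)
  assume neg: "\<not> ?thesis"
  then obtain t where t: "t \<ge> 1" "\<not> contains \<H> (complete_graph t)" by auto
  from neg obtain s where s: "s \<ge> 1" "\<not> contains \<H> (complete_tripartite s)" by auto
  define n where "n = t*t + 2*t + 2*s + 3"
  define Col :: "(nat \<times> nat \<times> (nat \<times> nat) set) set"
    where "Col = {..<3} \<times> {..<3} \<times> Pow ({..<4} \<times> {..<4})"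
  have fin: "finite Col" unfolding Col_def by simp
  have "(0,0,{}) \<in> Col" unfolding Col_def by simp
  then have ne: "Col \<noteq> {}" by blast
  obtain N where N: "\<forall>c::nat \<Rightarrow> nat \<Rightarrow> nat \<times> nat \<times> (nat \<times> nat) set. (\<forall>i j. i < j \<longrightarrow> j < N \<longrightarrow> c i j \<in> Col) \<longrightarrow>
            (\<exists>\<iota> col. (\<forall>k l. k < l \<longrightarrow> l < n \<longrightarrow> \<iota> k < \<iota> l) \<and> (\<forall>k<n. \<iota> k < N) \<and>
               (\<forall>k l. k < l \<longrightarrow> l < n \<longrightarrow> c (\<iota> k) (\<iota> l) = col))"
    using ramsey_ne[OF fin ne, of n] by blast
  have "\<forall>H\<in>\<H>. dist_ext_biclique_le H (4*N)"
  proof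
    fix H assume H: "H \<in> \<H>"
    have g: "is_graph H" using assms(1) H unfolding graph_class_def by blast
    from greedy[OF g, of N] show "dist_ext_biclique_le H (4*N)"
    proof
      assume "\<exists>X\<subseteq>verts H. card X \<le> 4*N \<and> extended_biclique (induced_delete H X)"
      then show ?thesis unfolding dist_ext_biclique_le_def by blast
    next
      assume "\<exists>\<tau> gs. (\<forall>i<N. gadget H (\<tau> i) (gs i)) \<and>
            (\<forall>i<N. \<forall>j<N. i \<noteq> j \<longrightarrow> gs i ` {..<Lt (\<tau> i)} \<inter> gs j ` {..<Lt (\<tau> j)} = {})"
      then obtain \<tau> gs where gad: "\<forall>i<N. gadget H (\<tau> i) (gs i)"
        and dis: "\<forall>i<N. \<forall>j<N. i \<noteq> j \<longrightarrow> gs i ` {..<Lt (\<tau> i)} \<inter> gs j ` {..<Lt (\<tau> j)} = {}"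
        by blast
      define c where "c i j = (\<tau> i, \<tau> j, {(p,q). p < 4 \<and> q < 4 \<and> {gs i p, gs j q} \<in> edges H})" for i j
      have cCol: "\<forall>i j. i < j \<longrightarrow> j < N \<longrightarrow> c i j \<in> Col"
      proof (intro allI impI)
        fix i j :: nat assume ij: "i < j" "j < N"
        have "\<tau> i < 3" "\<tau> j < 3" using gad ij unfolding gadget_def by auto
        then show "c i j \<in> Col" unfolding c_def Col_def by auto
      qed
      obtain \<iota> col where mono: "\<forall>k l. k < l \<longrightarrow> l < n \<longrightarrow> \<iota> k < \<iota> l" and rng: "\<forall>k<n. \<iota> k < N"
        and hom: "\<forall>k l. k < l \<longrightarrow> l < n \<longrightarrow> c (\<iota> k) (\<iota> l) = col"
        using N cCol by blast
      obtain a b P where col: "col = (a, b, P)" by (cases col) auto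
      have ta: "\<tau> (\<iota> k) = a" if k: "k < n" for k
      proof (cases "k < n - 1")
        case True
        have "c (\<iota> k) (\<iota> (n-1)) = col" using hom True k by auto
        then show ?thesis unfolding c_def col by simp
      next
        case False
        then have k1: "k = n - 1" using k by simp
        have "c (\<iota> 1) (\<iota> k) = col" using hom k k1 n_def by auto
        then have "\<tau> (\<iota> k) = b" unfolding c_def col by simp
        moreover have "c (\<iota> 0) (\<iota> 1) = col" "c (\<iota> 1) (\<iota> 2) = col" using hom n_def by auto
        then have "b = a" unfolding c_def col by auto
        ultimately show ?thesis by simp
      qed
      have gadk: "gadget H a (gs (\<iota> k))" if "k < n" for k
        using gad rng that ta by metis
      define v where "v x = gs (\<iota> (fst x)) (snd x)" for x
      define D where "D = {..<n} \<times> {..<Lt a}"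
      have inj: "inj_on v D"
      proof (rule inj_onI)
        fix x y assume xy: "x \<in> D" "y \<in> D" "v x = v y"
        obtain k p where x: "x = (k,p)" by (cases x)
        obtain l q where y: "y = (l,q)" by (cases y)
        have kl: "k < n" "l < n" "p < Lt a" "q < Lt a" using xy x y D_def by auto
        show "x = y"
        proof (cases "k = l")
          case True
          then have "gs (\<iota> k) p = gs (\<iota> k) q" using xy x y v_def by simp
          then have "p = q" using gadk[OF kl(1)] kl unfolding gadget_def inj_on_def by blast
          then show ?thesis using x y True by simp
        next
          case False
          then have "\<iota> k \<noteq> \<iota> l" using mono kl by (metis less_irrefl nat_neq_iff)
          then have "gs (\<iota> k) ` {..<Lt (\<tau> (\<iota> k))} \<inter> gs (\<iota> l) ` {..<Lt (\<tau> (\<iota> l))} = {}"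
            using dis rng kl by blast
          moreover have "gs (\<iota> k) p \<in> gs (\<iota> k) ` {..<Lt (\<tau> (\<iota> k))}" "gs (\<iota> l) q \<in> gs (\<iota> l) ` {..<Lt (\<tau> (\<iota> l))}"
            using ta kl by auto
          ultimately show ?thesis using xy x y v_def by auto
        qed
      qed
      have vD: "v ` D \<subseteq> verts H"
      proof
        fix y assume "y \<in> v ` D"
        then obtain k p where "k < n" "p < Lt a" "y = gs (\<iota> k) p" unfolding D_def v_def by auto
        then show "y \<in> verts H" using gadk unfolding gadget_def by blast
      qed
      have a3: "a < 3" using gadk[of 0] n_def unfolding gadget_def by simp
      have hadj: "\<forall>x\<in>D. \<forall>y\<in>D. x \<noteq> y \<longrightarrow> ({v x, v y} \<in> edges H \<longleftrightarrow> Apat P (Wt a) x y)"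
      proof (intro ballI impI)
        fix x y assume xy: "x \<in> D" "y \<in> D" "x \<noteq> y"
        obtain k p where x: "x = (k,p)" by (cases x)
        obtain l q where y: "y = (l,q)" by (cases y)
        have kl: "k < n" "l < n" "p < Lt a" "q < Lt a" using xy x y D_def by auto
        have p4: "p < 4" "q < 4" using kl Lt_le[of a] by auto
        show "({v x, v y} \<in> edges H \<longleftrightarrow> Apat P (Wt a) x y)"
        proof (cases "k < l")
          case True
          have "c (\<iota> k) (\<iota> l) = col" using hom True kl by blast
          then have "P = {(p,q). p < 4 \<and> q < 4 \<and> {gs (\<iota> k) p, gs (\<iota> l) q} \<in> edges H}"
            unfolding c_def col by simp
          then show ?thesis using True x y p4 unfolding v_def Apat_def by auto
        next
          case False
          show ?thesis
          proof (cases "l < k")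
            case True
            have "c (\<iota> l) (\<iota> k) = col" using hom True kl by blast
            then have "P = {(p,q). p < 4 \<and> q < 4 \<and> {gs (\<iota> l) p, gs (\<iota> k) q} \<in> edges H}"
              unfolding c_def col by simp
            then show ?thesis using True False x y p4 unfolding v_def Apat_def by (auto simp: insert_commute)
          next
            case False2: False
            then have kl': "k = l" using False by simp
            then have "p \<noteq> q" using xy x y by simp
            then have "({gs (\<iota> k) p, gs (\<iota> k) q} \<in> edges H) = Wt a p q"
              using gadk[OF kl(1)] kl unfolding gadget_def by blast
            then show ?thesis using kl' x y unfolding v_def Apat_def by simp
          qed
        qed
      qed
      have nn: "t*t + 2*t + 2*s \<le> n" using n_def by simp
      have s0: "0 < s" using s by simp
      from analysis[OF g a3 inj vD D_def hadj nn s0] show ?thesis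
      proof
        assume "\<exists>C. qfam H t C (\<lambda>_ _. True)"
        then obtain C where q: "qfam H t C (\<lambda>_ _. True)" by blast
        have "contains \<H> (complete_graph t)"
          by (rule contains_from_qfam[OF H assms(2) g q]) (auto simp: cg_verts cg_edges)
        then show ?thesis using t by simp
      next
        assume "\<exists>C. qfam H (3*s) C (\<lambda>c d. c div s \<noteq> d div s)"
        then obtain C where q: "qfam H (3*s) C (\<lambda>c d. c div s \<noteq> d div s)" by blast
        have "contains \<H> (complete_tripartite s)"
          by (rule contains_from_qfam[OF H assms(2) g q]) (auto simp: ct_verts ct_edges)
        then show ?thesis using s by simp
      qed
    qed
  qed
  then show False using neg by blast
qed

end
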